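(* Let $Q\in\mathbb{R}^{n\times n}$ be any symmetric matrix (not necessarily definite), $\mathcal{S}=\{x\in\mathbb{R}^n: x^TQx\le1\}$, and $A\in\mathbb{R}^{n\times n}$. Then $\mathcal{S}$ is an invariant set for the discrete system $x_{k+1}=Ax_k$ (i.e., $A\mathcal{S}\subseteq\mathcal{S}$) if and only if there exists $\mu\in[0,1]$ such that $A^TQA-\mu Q\preceq0$.
   Context: $\preceq 0$ denotes negative semidefiniteness of a symmetric matrix. *)

theory Defs
  imports "HOL-Analysis.Analysis"
begin

definition neg_semidef :: "real^'n^'n \<Rightarrow> bool" where
  "neg_semidef M \<longleftrightarrow> (\<forall>x::real^'n. x \<bullet> (M *v x) \<le> 0)"

end

theory Submission
  imports Defs
begin

lemma scaleR_mat_vec: "((k::real) *\<^sub>R (M::real^'n^'m)) *v x = k *\<^sub>R (M *v x)"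
  by (simp add: matrix_vector_mult_def vec_eq_iff sum_distrib_left algebra_simps)

lemma quad_expand:
  fixes M :: "real^'n^'n"
  shows "(x + t *\<^sub>R y) \<bullet> (M *v (x + t *\<^sub>R y)) =
     x \<bullet> (M *v x) + (x \<bullet> (M *v y) + y \<bullet> (M *v x)) * t + (y \<bullet> (M *v y)) * t^2"
  by (simp add: matrix_vector_right_distrib matrix_vector_mult_scaleR inner_add_left
      inner_add_right algebra_simps power2_eq_square)

lemma p_eq:
  fixes A Q :: "real^'n^'n"
  shows "z \<bullet> ((transpose A ** Q ** A) *v z) = (A *v z) \<bullet> (Q *v (A *v z))"
proof -
  have "(transpose A ** Q ** A) *v z = transpose A *v (Q *v (A *v z))"
    by (simp add: matrix_vector_mul_assoc matrix_mul_assoc)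
  also have "\<dots> = (Q *v (A *v z)) v* A" by simp
  finally have e: "(transpose A ** Q ** A) *v z = (Q *v (A *v z)) v* A" .
  have "z \<bullet> ((Q *v (A *v z)) v* A) = ((Q *v (A *v z)) v* A) \<bullet> z" by (rule inner_commute)
  also have "\<dots> = (Q *v (A *v z)) \<bullet> (A *v z)" by (rule dot_lmul_matrix)
  also have "\<dots> = (A *v z) \<bullet> (Q *v (A *v z))" by (rule inner_commute)
  finally show ?thesis using e by simp
qed

lemma key_real:
  fixes Q0 Qb Q1 P0 Pb P1 lam :: real
  assumes q0: "Q0 > 0" and q1: "Q1 < 0"
    and H: "\<And>t. Q0 + Qb*t + Q1*t^2 \<le> 0 \<Longrightarrow> P0 + Pb*t + P1*t^2 \<le> 0"
    and r0: "P0 > lam*Q0" and r1: "P1 > lam*Q1"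
  shows False
proof -
  define D where "D = Qb^2 - 4*Q0*Q1"
  have Dpos: "D > Qb^2" using q0 q1 unfolding D_def by (simp add: mult_pos_neg)
  define s where "s = sqrt D"
  have D0: "0 \<le> D" using Dpos zero_le_power2[of Qb] by linarith
  have s2: "s^2 = D" unfolding s_def using D0 by simp
  have sgt: "s > \<bar>Qb\<bar>" unfolding s_def using Dpos
    using real_sqrt_less_mono[OF Dpos] by simp
  define t1 where "t1 = (-Qb - s)/(2*Q1)"
  define t2 where "t2 = (-Qb + s)/(2*Q1)"
  have t1p: "t1 > 0" unfolding t1_def using sgt q1 by (auto intro!: divide_neg_neg)
  have t2n: "t2 < 0" unfolding t2_def using sgt q1 by (auto intro!: divide_pos_neg)
  have root: "Q0 + Qb*t + Q1*t^2 = 0" if "t * (2*Q1) = -Qb + ee * s" "ee^2 = 1" for t ee :: real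
  proof -
    have "4*Q1*(Q0 + Qb*t + Q1*t^2) = 4*Q1*Q0 + 2*Qb*(t * (2*Q1)) + (t * (2*Q1))^2"
      by (simp add: algebra_simps power2_eq_square)
    also have "\<dots> = 4*Q1*Q0 + 2*Qb*(-Qb + ee * s) + (-Qb + ee * s)^2"
      using that(1) by simp
    also have "\<dots> = 4*Q1*Q0 - Qb^2 + ee^2 * s^2"
      by (simp add: algebra_simps power2_eq_square)
    also have "\<dots> = 0" using that s2 unfolding D_def by simp
    finally show ?thesis using q1 by simp
  qed
  have Q1z: "Q0 + Qb*t1 + Q1*t1^2 = 0" using root[of t1 "-1"] q1 unfolding t1_def by simp
  have Q2z: "Q0 + Qb*t2 + Q1*t2^2 = 0" using root[of t2 1] q1 unfolding t2_def by simp
  define R0 Rb R1 where "R0 = P0 - lam*Q0" and "Rb = Pb - lam*Qb" and "R1 = P1 - lam*Q1"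
  have h1: "R0 + Rb*t1 + R1*t1^2 \<le> 0"
  proof -
    have "R0 + Rb*t1 + R1*t1^2 = (P0 + Pb*t1 + P1*t1^2) - lam*(Q0 + Qb*t1 + Q1*t1^2)"
      unfolding R0_def Rb_def R1_def by (simp add: algebra_simps)
    then show ?thesis using H[OF eq_refl[OF Q1z]] Q1z by simp
  qed
  have h2: "R0 + Rb*t2 + R1*t2^2 \<le> 0"
  proof -
    have "R0 + Rb*t2 + R1*t2^2 = (P0 + Pb*t2 + P1*t2^2) - lam*(Q0 + Qb*t2 + Q1*t2^2)"
      unfolding R0_def Rb_def R1_def by (simp add: algebra_simps)
    then show ?thesis using H[OF eq_refl[OF Q2z]] Q2z by simp
  qed
  have R0p: "R0 > 0" and R1p: "R1 > 0" using r0 r1 unfolding R0_def R1_def by auto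
  have id: "t1*(R0 + Rb*t2 + R1*t2^2) - t2*(R0 + Rb*t1 + R1*t1^2) = (t1 - t2)*(R0 - R1*t1*t2)"
    by (simp add: algebra_simps power2_eq_square)
  have "t1*(R0 + Rb*t2 + R1*t2^2) \<le> 0" using t1p h2 by (simp add: mult_nonneg_nonpos)
  moreover have "- t2*(R0 + Rb*t1 + R1*t1^2) \<le> 0" using t2n h1 by (simp add: mult_nonpos_nonpos)
  moreover have "R1*t1*t2 < 0" using R1p t1p t2n by (simp add: mult_pos_neg)
  then have "(t1 - t2)*(R0 - R1*t1*t2) > 0" using t1p t2n R0p by simp
  ultimately show False using id by linarith
qed



lemma ratio_le:
  fixes Q M :: "real^'n^'n"
  assumes qx: "x \<bullet> (Q *v x) > 0" and qy: "y \<bullet> (Q *v y) < 0"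
    and H: "\<And>z. z \<bullet> (Q *v z) \<le> 0 \<Longrightarrow> z \<bullet> (M *v z) \<le> 0"
  shows "x \<bullet> (M *v x) / (x \<bullet> (Q *v x)) \<le> y \<bullet> (M *v y) / (y \<bullet> (Q *v y))"
proof (rule ccontr)
  define a where "a = x \<bullet> (M *v x) / (x \<bullet> (Q *v x))"
  define c where "c = y \<bullet> (M *v y) / (y \<bullet> (Q *v y))"
  assume "\<not> ?thesis"
  then have ac: "c < a" unfolding a_def c_def by simp
  define lam where "lam = (a + c) / 2"
  have pa: "x \<bullet> (M *v x) = a * (x \<bullet> (Q *v x))" unfolding a_def using qx by simp
  have pc: "y \<bullet> (M *v y) = c * (y \<bullet> (Q *v y))" unfolding c_def using qy by simp
  have r0: "x \<bullet> (M *v x) > lam * (x \<bullet> (Q *v x))"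
    unfolding pa using ac qx unfolding lam_def by (intro mult_strict_right_mono) auto
  have r1: "y \<bullet> (M *v y) > lam * (y \<bullet> (Q *v y))"
    unfolding pc using ac qy unfolding lam_def by (intro mult_strict_right_mono_neg) auto
  show False
  proof (rule key_real[OF qx qy _ r0 r1])
    fix t :: real
    assume "x \<bullet> (Q *v x) + (x \<bullet> (Q *v y) + y \<bullet> (Q *v x)) * t + y \<bullet> (Q *v y) * t^2 \<le> 0"
    then have "(x + t *\<^sub>R y) \<bullet> (Q *v (x + t *\<^sub>R y)) \<le> 0" by (simp only: quad_expand)
    then have "(x + t *\<^sub>R y) \<bullet> (M *v (x + t *\<^sub>R y)) \<le> 0" by (rule H)
    then show "x \<bullet> (M *v x) + (x \<bullet> (M *v y) + y \<bullet> (M *v x)) * t + y \<bullet> (M *v y) * t^2 \<le> 0"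
      by (simp only: quad_expand)
  qed
qed

lemma quad_scale:
  fixes M :: "real^'n^'n"
  shows "(c *\<^sub>R z) \<bullet> (M *v (c *\<^sub>R z)) = c^2 * (z \<bullet> (M *v z))"
  by (simp add: matrix_vector_mult_scaleR power2_eq_square)

theorem theorem3p13:
  fixes Q A :: "real^'n^'n"
  assumes "transpose Q = Q"
  defines "S \<equiv> {x::real^'n. x \<bullet> (Q *v x) \<le> 1}"
  shows "((\<lambda>x. A *v x) ` S \<subseteq> S) \<longleftrightarrow>
         (\<exists>\<mu>::real. 0 \<le> \<mu> \<and> \<mu> \<le> 1 \<and>
            neg_semidef (transpose A ** Q ** A - \<mu> *\<^sub>R Q))"
proof -
  define M where "M = transpose A ** Q ** A"
  have pM: "z \<bullet> (M *v z) = (A *v z) \<bullet> (Q *v (A *v z))" for z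
    unfolding M_def by (rule p_eq)
  have nsd: "neg_semidef (M - \<mu> *\<^sub>R Q) \<longleftrightarrow> (\<forall>z. z \<bullet> (M *v z) \<le> \<mu> * (z \<bullet> (Q *v z)))" for \<mu>
    unfolding neg_semidef_def by (simp add: matrix_vector_mult_diff_rdistrib scaleR_mat_vec inner_diff_right)
  show ?thesis
  proof
    assume inv: "(\<lambda>x. A *v x) ` S \<subseteq> S"
    have sc: "s * (z \<bullet> (M *v z)) \<le> 1" if "s \<ge> 0" "s * (z \<bullet> (Q *v z)) \<le> 1" for s z
    proof -
      have eQ: "(sqrt s *\<^sub>R z) \<bullet> (Q *v (sqrt s *\<^sub>R z)) = s * (z \<bullet> (Q *v z))"
        by (simp only: quad_scale) (use that in simp)
      have eM: "(sqrt s *\<^sub>R z) \<bullet> (M *v (sqrt s *\<^sub>R z)) = s * (z \<bullet> (M *v z))"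
        by (simp only: quad_scale) (use that in simp)
      have "(sqrt s *\<^sub>R z) \<in> S" unfolding S_def using that eQ by simp
      then have "A *v (sqrt s *\<^sub>R z) \<in> S" using inv by blast
      then have "(sqrt s *\<^sub>R z) \<bullet> (M *v (sqrt s *\<^sub>R z)) \<le> 1" unfolding S_def pM by simp
      then show ?thesis using eM by simp
    qed
    have H0: "z \<bullet> (M *v z) \<le> 0" if "z \<bullet> (Q *v z) \<le> 0" for z
    proof (rule ccontr)
      assume "\<not> ?thesis"
      then have pp: "z \<bullet> (M *v z) > 0" by simp
      have "(2 / (z \<bullet> (M *v z))) * (z \<bullet> (M *v z)) \<le> 1"
        by (rule sc) (use pp that in \<open>auto simp: mult_nonneg_nonpos\<close>)
      then show False using pp by simp
    qed
    have H1: "z \<bullet> (M *v z) \<le> z \<bullet> (Q *v z)" if "z \<bullet> (Q *v z) > 0" for z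
    proof -
      have "(1 / (z \<bullet> (Q *v z))) * (z \<bullet> (M *v z)) \<le> 1"
        by (rule sc) (use that in auto)
      then show ?thesis using that by (simp add: field_simps)
    qed
    define R where "R = insert 0 {z \<bullet> (M *v z) / (z \<bullet> (Q *v z)) | z. z \<bullet> (Q *v z) > 0}"
    define \<mu> where "\<mu> = Sup R"
    have Rne: "R \<noteq> {}" unfolding R_def by simp
    have Rle1: "r \<le> 1" if "r \<in> R" for r
      using that H1 unfolding R_def by (auto simp: field_simps)
    have bdd: "bdd_above R" using Rle1 by (intro bdd_aboveI[of _ 1]) auto
    have mu0: "0 \<le> \<mu>" unfolding \<mu>_def using bdd by (intro cSup_upper) (auto simp: R_def)
    have mu1: "\<mu> \<le> 1" unfolding \<mu>_def using Rne Rle1 by (intro cSup_least) auto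
    have "\<forall>z. z \<bullet> (M *v z) \<le> \<mu> * (z \<bullet> (Q *v z))"
    proof
      fix z :: "real^'n"
      consider "z \<bullet> (Q *v z) > 0" | "z \<bullet> (Q *v z) = 0" | "z \<bullet> (Q *v z) < 0" by linarith
      then show "z \<bullet> (M *v z) \<le> \<mu> * (z \<bullet> (Q *v z))"
      proof cases
        case 1
        have "z \<bullet> (M *v z) / (z \<bullet> (Q *v z)) \<le> \<mu>" unfolding \<mu>_def using bdd
          by (intro cSup_upper) (use 1 in \<open>auto simp: R_def\<close>)
        then show ?thesis using 1 by (simp add: field_simps)
      next
        case 2
        then show ?thesis using H0[of z] by simp
      next
        case 3
        have "\<mu> \<le> z \<bullet> (M *v z) / (z \<bullet> (Q *v z))" unfolding \<mu>_def
        proof (rule cSup_least[OF Rne])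
          fix r assume "r \<in> R"
          then show "r \<le> z \<bullet> (M *v z) / (z \<bullet> (Q *v z))"
            unfolding R_def
          proof
            assume "r = 0"
            then show ?thesis using H0[of z] 3 by (simp add: divide_nonpos_neg)
          next
            assume "r \<in> {z \<bullet> (M *v z) / (z \<bullet> (Q *v z)) | z. z \<bullet> (Q *v z) > 0}"
            then obtain x where "r = x \<bullet> (M *v x) / (x \<bullet> (Q *v x))" "x \<bullet> (Q *v x) > 0" by blast
            then show ?thesis using ratio_le[of x Q z M] 3 H0 by simp
          qed
        qed
        then have "\<mu> * (z \<bullet> (Q *v z)) \<ge> (z \<bullet> (M *v z) / (z \<bullet> (Q *v z))) * (z \<bullet> (Q *v z))"
          using 3 by (intro mult_right_mono_neg) auto
        then show ?thesis using 3 by simp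
      qed
    qed
    then show "\<exists>\<mu>::real. 0 \<le> \<mu> \<and> \<mu> \<le> 1 \<and> neg_semidef (transpose A ** Q ** A - \<mu> *\<^sub>R Q)"
      using mu0 mu1 nsd unfolding M_def by blast
  next
    assume "\<exists>\<mu>::real. 0 \<le> \<mu> \<and> \<mu> \<le> 1 \<and> neg_semidef (transpose A ** Q ** A - \<mu> *\<^sub>R Q)"
    then obtain \<mu> where m0: "0 \<le> \<mu>" and m1: "\<mu> \<le> 1"
      and ns: "\<forall>z. z \<bullet> (M *v z) \<le> \<mu> * (z \<bullet> (Q *v z))" using nsd unfolding M_def by blast
    show "(\<lambda>x. A *v x) ` S \<subseteq> S"
    proof
      fix w assume "w \<in> (\<lambda>x. A *v x) ` S"
      then obtain x where w: "w = A *v x" and xS: "x \<bullet> (Q *v x) \<le> 1" unfolding S_def by blast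
      have "w \<bullet> (Q *v w) \<le> \<mu> * (x \<bullet> (Q *v x))" using ns pM w by metis
      also have "\<dots> \<le> 1"
      proof (cases "x \<bullet> (Q *v x) \<ge> 0")
        case True
        then have "\<mu> * (x \<bullet> (Q *v x)) \<le> 1 * (x \<bullet> (Q *v x))" using m1 by (intro mult_right_mono)
        then show ?thesis using xS by simp
      next
        case False
        then show ?thesis using m0 by (simp add: mult_nonneg_nonpos order_trans[of _ 0 1])
      qed
      finally show "w \<in> S" unfolding S_def by simp
    qed
  qed
qed

end
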